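(* Let $A\subseteq\mathbb{R}^n$ be finite (Euclidean metric) and $\beta>0$. For all $r,k>0$: (i) $\mathrm{DCr}^\beta_{r,k}(A)\subseteq\mathrm{Cov}_{(1+\beta^{-1})r,k}(A)$, and (ii) $\mathrm{Cov}_{r,k}(A)\subseteq\mathrm{DCr}^\beta_{\max\{1,2\beta\}r,k}(A)$.
   Context: $d$ Euclidean, $\bar B_d(x,r)=\{y:d(x,y)\le r\}$. For finite $A$, $k>0$, $x\in\mathbb{R}^n$, $\mathrm{core}^A_k(x)$ is the distance from $x$ to its $\lceil k\rceil$-th nearest neighbor in $A$ (each point of $A$ counted once, $x$ itself counting if $x\in A$); equivalently $\min\{r\ge0:|\bar B_d(x,r)\cap A|\ge k\}$, and $\infty$ if $k>|A|$. Multicover: $\mathrm{Cov}_{r,k}(A)=\{x:|\bar B_d(x,r)\cap A|\ge k\}$. For $\beta>0$: $\Lambda^\beta_k(a,x)=\max\{\beta\,\mathrm{core}^A_k(a),d(a,x)\}$, $B^\beta_{r,k}(a)=\{x:\Lambda^\beta_k(a,x)\le r\}$. $\mathrm{Vor}_A(a)=\{x:d(a,x)\le d(a',x)\ \forall a'\in A\}$. Delaunay core bifiltration: $\mathrm{DCr}^\beta_{r,k}(A)=\bigcup_{a\in A}\big(B^\beta_{r,k}(a)\cap\mathrm{Vor}_A(a)\big)$. *)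

theory Defs
  imports "HOL-Analysis.Analysis" "HOL-Library.Extended_Real"
begin

text \<open>Distance from x to its ceil(k)-th nearest neighbour in A; infinity if k exceeds card A.\<close>
definition core :: "'a::metric_space set \<Rightarrow> real \<Rightarrow> 'a \<Rightarrow> ereal" where
  "core A k x = (if real (card A) < k then \<infinity>
     else ereal (Inf {r. r \<ge> 0 \<and> real (card (cball x r \<inter> A)) \<ge> k}))"

definition Cov :: "'a::metric_space set \<Rightarrow> real \<Rightarrow> real \<Rightarrow> 'a set" where
  "Cov A r k = {x. real (card (cball x r \<inter> A)) \<ge> k}"

definition Lambda :: "'a::metric_space set \<Rightarrow> real \<Rightarrow> real \<Rightarrow> 'a \<Rightarrow> 'a \<Rightarrow> ereal" where
  "Lambda A \<beta> k a x = max (ereal \<beta> * core A k a) (ereal (dist a x))"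

definition Bcore :: "'a::metric_space set \<Rightarrow> real \<Rightarrow> real \<Rightarrow> real \<Rightarrow> 'a \<Rightarrow> 'a set" where
  "Bcore A \<beta> r k a = {x. Lambda A \<beta> k a x \<le> ereal r}"

definition Vor :: "'a::metric_space set \<Rightarrow> 'a \<Rightarrow> 'a set" where
  "Vor A a = {x. \<forall>a'\<in>A. dist a x \<le> dist a' x}"

definition DCr :: "'a::metric_space set \<Rightarrow> real \<Rightarrow> real \<Rightarrow> real \<Rightarrow> 'a set" where
  "DCr A \<beta> r k = (\<Union>a\<in>A. Bcore A \<beta> r k a \<inter> Vor A a)"

end

theory Submission
  imports Defs
begin

lemma core_attain:
  fixes A :: "'a::metric_space set" and x :: 'a
  assumes fin: "finite A" and ck: "\<not> real (card A) < k"
  defines "S \<equiv> {r. r \<ge> 0 \<and> real (card (cball x r \<inter> A)) \<ge> k}"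
  shows "S \<noteq> {}" "bdd_below S" "Inf S \<ge> 0" "real (card (cball x (Inf S) \<inter> A)) \<ge> k"
proof -
  define R where "R = (if A = {} then 0 else Max ((\<lambda>a. dist x a) ` A))"
  have "A \<subseteq> cball x R"
    using fin by (auto simp: R_def mem_cball intro!: Max_ge)
  moreover have "R \<ge> 0"
  proof (cases "A = {}")
    case False
    then obtain a where "a \<in> A" by auto
    hence "dist x a \<le> Max ((\<lambda>a. dist x a) ` A)" using fin by (intro Max_ge) auto
    hence "0 \<le> Max ((\<lambda>a. dist x a) ` A)" using zero_le_dist[of x a] by linarith
    thus ?thesis using False by (simp add: R_def)
  qed (simp add: R_def)
  ultimately have "R \<in> S" using ck by (auto simp: S_def Int_absorb1)
  thus ne: "S \<noteq> {}" by auto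
  show bb: "bdd_below S" unfolding S_def by (rule bdd_belowI[of _ 0]) auto
  show "Inf S \<ge> 0" using ne by (intro cInf_greatest) (auto simp: S_def)
  define c where "c = Inf S"
  define D where "D = {dist x a | a. a \<in> A \<and> dist x a > c}"
  have finD: "finite D" unfolding D_def using fin by auto
  define r' where "r' = (if D = {} then c + 1 else Min D)"
  have "r' > c" using finD by (auto simp: r'_def D_def)
  then obtain s where s: "s \<in> S" "s < r'" using ne unfolding c_def by (meson cInf_lessD)
  have sub: "cball x s \<inter> A \<subseteq> cball x c \<inter> A"
  proof
    fix a assume a: "a \<in> cball x s \<inter> A"
    show "a \<in> cball x c \<inter> A"
    proof (rule ccontr)
      assume "a \<notin> cball x c \<inter> A"
      hence "dist x a \<in> D" using a by (auto simp: D_def mem_cball)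
      hence "r' \<le> dist x a" using finD by (auto simp: r'_def)
      thus False using a s by (auto simp: mem_cball)
    qed
  qed
  have "card (cball x s \<inter> A) \<le> card (cball x c \<inter> A)"
    by (rule card_mono[OF _ sub]) (use fin in auto)
  thus "real (card (cball x (Inf S) \<inter> A)) \<ge> k" using s(1) unfolding c_def S_def by auto
qed

theorem mainTheorem7:
  fixes A :: "'a::euclidean_space set" and \<beta> r k :: real
  assumes "finite A" and "\<beta> > 0" and "r > 0" and "k > 0"
  shows "DCr A \<beta> r k \<subseteq> Cov A ((1 + 1 / \<beta>) * r) k \<and>
         Cov A r k \<subseteq> DCr A \<beta> (max 1 (2 * \<beta>) * r) k"
proof
  note fin = assms(1)
  show "DCr A \<beta> r k \<subseteq> Cov A ((1 + 1 / \<beta>) * r) k"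
  proof
    fix x assume "x \<in> DCr A \<beta> r k"
    then obtain a where a: "a \<in> A" and L: "Lambda A \<beta> k a x \<le> ereal r"
      by (auto simp: DCr_def Bcore_def)
    have c1: "ereal \<beta> * core A k a \<le> ereal r" and d: "dist a x \<le> r"
      using L by (auto simp: Lambda_def)
    have ck: "\<not> real (card A) < k"
    proof
      assume "real (card A) < k"
      hence "core A k a = \<infinity>" by (simp add: core_def)
      thus False using c1 assms(2) by simp
    qed
    define S where "S = {s. s \<ge> 0 \<and> real (card (cball a s \<inter> A)) \<ge> k}"
    have co: "core A k a = ereal (Inf S)" using ck by (simp add: core_def S_def)
    note att = core_attain[OF fin ck, where x=a, folded S_def]
    have "\<beta> * Inf S \<le> r" using c1 co by simp
    hence cle: "Inf S \<le> r / \<beta>" using assms(2) by (simp add: field_simps mult.commute)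
    have "cball a (Inf S) \<inter> A \<subseteq> cball x ((1 + 1 / \<beta>) * r) \<inter> A"
    proof
      fix b assume b: "b \<in> cball a (Inf S) \<inter> A"
      have "dist x b \<le> dist x a + dist a b" by (rule dist_triangle)
      also have "\<dots> \<le> r + r / \<beta>" using b d cle by (auto simp: mem_cball dist_commute)
      finally show "b \<in> cball x ((1 + 1 / \<beta>) * r) \<inter> A" using b
        by (auto simp: mem_cball field_simps)
    qed
    hence "card (cball a (Inf S) \<inter> A) \<le> card (cball x ((1 + 1 / \<beta>) * r) \<inter> A)"
      by (rule card_mono[rotated]) (use fin in auto)
    thus "x \<in> Cov A ((1 + 1 / \<beta>) * r) k" using att(4) by (auto simp: Cov_def)
  qed
  show "Cov A r k \<subseteq> DCr A \<beta> (max 1 (2 * \<beta>) * r) k"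
  proof
    fix x assume "x \<in> Cov A r k"
    hence cx: "real (card (cball x r \<inter> A)) \<ge> k" by (simp add: Cov_def)
    have "card (cball x r \<inter> A) \<le> card A" by (rule card_mono) (use fin in auto)
    hence ck: "\<not> real (card A) < k" using cx by linarith
    have "cball x r \<inter> A \<noteq> {}" using cx assms(4) by (auto)
    then obtain b where b: "b \<in> A" "dist x b \<le> r" by (auto simp: mem_cball)
    define m where "m = Min ((\<lambda>a. dist a x) ` A)"
    have "m \<in> (\<lambda>a. dist a x) ` A" unfolding m_def using fin b(1) by (intro Min_in) auto
    then obtain a where a1: "a \<in> A" "dist a x = m" by auto
    have a2: "\<And>a'. a' \<in> A \<Longrightarrow> dist a x \<le> dist a' x"
      using a1(2) fin unfolding m_def by (auto intro!: Min_le)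
    note a = a1(1) a2
    have dax: "dist a x \<le> r" using a(2)[OF b(1)] b(2) by (simp add: dist_commute)
    define S where "S = {s. s \<ge> 0 \<and> real (card (cball a s \<inter> A)) \<ge> k}"
    have co: "core A k a = ereal (Inf S)" using ck by (simp add: core_def S_def)
    note att = core_attain[OF fin ck, where x=a, folded S_def]
    have "cball x r \<inter> A \<subseteq> cball a (2 * r) \<inter> A"
    proof
      fix y assume y: "y \<in> cball x r \<inter> A"
      have "dist a y \<le> dist a x + dist x y" by (rule dist_triangle)
      thus "y \<in> cball a (2 * r) \<inter> A" using y dax by (auto simp: mem_cball)
    qed
    hence "card (cball x r \<inter> A) \<le> card (cball a (2 * r) \<inter> A)"
      by (rule card_mono[rotated]) (use fin in auto)
    hence "2 * r \<in> S" using cx assms(3) by (auto simp: S_def)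
    hence "Inf S \<le> 2 * r" using att(2) by (rule cInf_lower)
    hence "\<beta> * Inf S \<le> max 1 (2 * \<beta>) * r"
    proof -
      assume h: "Inf S \<le> 2 * r"
      have "\<beta> * Inf S \<le> \<beta> * (2 * r)" using h assms(2) by (intro mult_left_mono) auto
      also have "\<dots> = (2 * \<beta>) * r" by simp
      also have "\<dots> \<le> max 1 (2 * \<beta>) * r" using assms(3) by (intro mult_right_mono) auto
      finally show ?thesis .
    qed
    moreover have "dist a x \<le> max 1 (2 * \<beta>) * r"
    proof -
      have "1 * r \<le> max 1 (2 * \<beta>) * r" using assms(3) by (intro mult_right_mono) auto
      thus ?thesis using dax by simp
    qed
    ultimately have "Lambda A \<beta> k a x \<le> ereal (max 1 (2 * \<beta>) * r)"
      by (simp add: Lambda_def co)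
    moreover have "x \<in> Vor A a" using a(2) by (simp add: Vor_def)
    ultimately show "x \<in> DCr A \<beta> (max 1 (2 * \<beta>) * r) k"
      using a(1) by (auto simp: DCr_def Bcore_def)
  qed
qed

end
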